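(* For all integers $d\ge 2$ and $n\ge 1$, every Latin hypercuboid in $\mathrm{LHC}(d,n,1)$ is completable. Consequently $\mathrm{NC}_d(n)\ge 2$ whenever it is defined.
   Context: $[n]=\{1,\dots,n\}$. For integers $d\ge2$ and $1\le k\le n$, $\mathrm{LHC}(d,n,k)$ denotes the set of $d$-dimensional arrays of dimensions $n\times\cdots\times n\times k$ (the last coordinate ranging over $[k]$, the others over $[n]$) with entries from $[n]$ such that each symbol occurs at most once in each axis-parallel line (a set of cells obtained by fixing all coordinates but one). A hypercuboid $H\in\mathrm{LHC}(d,n,k)$ is completable if it is contained in (i.e. equals the restriction to the first $k$ values of the last coordinate of) some array in $\mathrm{LHC}(d,n,n)$ (a Latin hypercube). $\mathrm{NC}_d(n)$ denotes the smallest $k$ such that some hypercuboid in $\mathrm{LHC}(d,n,k)$ is not completable. *)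

theory Defs
  imports Main
begin

text \<open>A cell of a d-dimensional n x ... x n x k array is a list of d coordinates;
  coordinates 0..d-2 range over {1..n}, the last coordinate (index d-1) over {1..k}.\<close>
definition cells :: "nat \<Rightarrow> nat \<Rightarrow> nat \<Rightarrow> nat list set" where
  "cells d n k = {c. length c = d \<and> (\<forall>i<d - 1. c ! i \<in> {1..n}) \<and> c ! (d - 1) \<in> {1..k}}"

definition same_line :: "nat list \<Rightarrow> nat list \<Rightarrow> bool" where
  "same_line c c' \<longleftrightarrow> length c = length c' \<and>
     (\<exists>i<length c. \<forall>j<length c. j \<noteq> i \<longrightarrow> c ! j = c' ! j)"

definition LHC :: "nat \<Rightarrow> nat \<Rightarrow> nat \<Rightarrow> (nat list \<Rightarrow> nat) set" where
  "LHC d n k = {H. (\<forall>c \<in> cells d n k. H c \<in> {1..n}) \<and>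
     (\<forall>c \<in> cells d n k. \<forall>c' \<in> cells d n k. c \<noteq> c' \<and> same_line c c' \<longrightarrow> H c \<noteq> H c')}"

definition completable :: "nat \<Rightarrow> nat \<Rightarrow> nat \<Rightarrow> (nat list \<Rightarrow> nat) \<Rightarrow> bool" where
  "completable d n k H \<longleftrightarrow> (\<exists>L \<in> LHC d n n. \<forall>c \<in> cells d n k. L c = H c)"

text \<open>NC_d(n): least k (1 <= k <= n) such that some hypercuboid in LHC(d,n,k) is not completable;
  meaningful only when such k exists.\<close>
definition NC_exists :: "nat \<Rightarrow> nat \<Rightarrow> bool" where
  "NC_exists d n \<longleftrightarrow> (\<exists>k. 1 \<le> k \<and> k \<le> n \<and> (\<exists>H \<in> LHC d n k. \<not> completable d n k H))"

definition NC :: "nat \<Rightarrow> nat \<Rightarrow> nat" where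
  "NC d n = (LEAST k. 1 \<le> k \<and> k \<le> n \<and> (\<exists>H \<in> LHC d n k. \<not> completable d n k H))"

end

theory Submission
  imports Defs
begin

lemma mod_inj_aux:
  fixes x y n :: nat
  assumes "x mod n = y mod n" "x < y + n" "y < x + n"
  shows "x = y"
proof (rule ccontr)
  assume ne: "x \<noteq> y"
  { fix a b :: nat assume "a < b" "a mod n = b mod n" "b < a + n"
    then have "n dvd b - a" using mod_eq_dvd_iff_nat[of a b n] by simp
    then have False using \<open>a < b\<close> \<open>b < a + n\<close> by (auto dest: dvd_imp_le)
  }
  with assms ne show False by (metis linorder_neqE_nat)
qed

theorem mainTheorem5:
  fixes d n :: nat
  assumes "d \<ge> 2" and "n \<ge> 1"
  shows "(\<forall>H \<in> LHC d n 1. completable d n 1 H) \<and> (NC_exists d n \<longrightarrow> NC d n \<ge> 2)"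
proof -
  have part1: "completable d n 1 H" if H: "H \<in> LHC d n 1" for H
  proof -
    define base where "base c = list_update c (d-1) (1::nat)" for c :: "nat list"
    define L where "L c = (H (base c) + c!(d-1) - 2) mod n + 1" for c
    have bcell: "base c \<in> cells d n 1" if "c \<in> cells d n n" for c
      using that assms by (auto simp: cells_def base_def nth_list_update)
    have Hr: "H c \<in> {1..n}" if "c \<in> cells d n 1" for c using H that by (auto simp: LHC_def)
    have Hd: "H c \<noteq> H c'" if "c \<in> cells d n 1" "c' \<in> cells d n 1" "c \<noteq> c'" "same_line c c'" for c c'
      using H that by (auto simp: LHC_def)
    have restr: "L c = H c" if "c \<in> cells d n 1" for c
    proof -
      have "c!(d-1) = 1" using that by (auto simp: cells_def)
      then have "base c = c" unfolding base_def by (metis list_update_id)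
      moreover have "H c \<in> {1..n}" using Hr that by blast
      ultimately show ?thesis using \<open>c!(d-1) = 1\<close> by (auto simp: L_def)
    qed
    have Lr: "L c \<in> {1..n}" for c using assms by (simp add: L_def Suc_leI)
    have Ldist: "L c \<noteq> L c'" if c: "c \<in> cells d n n" and c': "c' \<in> cells d n n"
      and ne: "c \<noteq> c'" and sl: "same_line c c'" for c c'
    proof
      assume eq: "L c = L c'"
      have len: "length c = d" "length c' = d" using c c' by (auto simp: cells_def)
      obtain i where i: "i < d" and agree: "\<And>j. j < d \<Longrightarrow> j \<noteq> i \<Longrightarrow> c!j = c'!j"
        using sl len by (auto simp: same_line_def)
      have ci: "c!i \<noteq> c'!i"
      proof
        assume "c!i = c'!i"
        then have "c = c'" using agree len by (metis nth_equalityI)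
        with ne show False by simp
      qed
      have ta: "c!(d-1) \<in> {1..n}" "c'!(d-1) \<in> {1..n}" using c c' by (auto simp: cells_def)
      have hb: "H (base c) \<in> {1..n}" "H (base c') \<in> {1..n}" using Hr bcell c c' by blast+
      have modeq: "(H (base c) + c!(d-1) - 2) mod n = (H (base c') + c'!(d-1) - 2) mod n"
        using eq by (simp add: L_def)
      show False
      proof (cases "i = d - 1")
        case True
        have "base c = base c'" unfolding base_def
          by (rule nth_equalityI) (use len agree True in \<open>auto simp: nth_list_update\<close>)
        have "H (base c) + c!(d-1) - 2 = H (base c') + c'!(d-1) - 2"
          by (rule mod_inj_aux[OF modeq]) (use \<open>base c = base c'\<close> ta hb in auto)
        then show False using \<open>base c = base c'\<close> ci True ta hb by (simp only: atLeastAtMost_iff) arith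
      next
        case False
        have tt: "c!(d-1) = c'!(d-1)" using agree False assms by simp
        have bne: "base c \<noteq> base c'"
        proof
          assume "base c = base c'"
          then have "base c ! i = base c' ! i" by simp
          then show False using ci False len i by (simp add: base_def nth_list_update)
        qed
        have bsl: "same_line (base c) (base c')"
          unfolding same_line_def using len i agree
          by (auto simp: base_def nth_list_update intro!: exI[of _ i])
        have "H (base c) + c!(d-1) - 2 = H (base c') + c'!(d-1) - 2"
          by (rule mod_inj_aux[OF modeq]) (use tt ta hb in auto)
        then have "H (base c) = H (base c')" using tt ta hb by (simp only: atLeastAtMost_iff) arith
        then show False using Hd[OF bcell[OF c] bcell[OF c'] bne bsl] by simp
      qed
    qed
    have "L \<in> LHC d n n" using Lr Ldist by (auto simp: LHC_def)
    then show ?thesis using restr by (auto simp: completable_def)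
  qed
  have part2: "NC d n \<ge> 2" if ex: "NC_exists d n"
  proof -
    let ?P = "\<lambda>k. 1 \<le> k \<and> k \<le> n \<and> (\<exists>H \<in> LHC d n k. \<not> completable d n k H)"
    have "?P (NC d n)" unfolding NC_def using ex unfolding NC_exists_def by (rule LeastI_ex)
    then show ?thesis using part1
      by (metis One_nat_def Suc_1 Suc_leI le_neq_implies_less)
  qed
  show ?thesis using part1 part2 by blast
qed

end
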